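(* For all $\alpha,\beta\in K$, $$\sum_{s=1}^\kappa\Big(\frac12-\frac s\kappa\Big)(\alpha|\sigma^s\beta)=-\langle\alpha,\beta\rangle+\mathrm{rk}(\alpha)\deg(\beta)-\mathrm{rk}(\beta)\deg(\alpha),$$ where $\kappa=2(n-2)$.
   Context: Fix an integer $n\ge3$; $X=\mathbb{P}^1_{n-2,2,2}$ is the orbifold projective line with orbifold points of orders $n-2,2,2$; $a_1=n-2$, $a_2=a_3=2$. Its $K$-ring is $K=\mathbb{Z}[L_1,L_2,L_3]/\langle L_i^{a_i}-L_j^{a_j},(L_i-1)(L_j-1):i\neq j\rangle$, $L:=L_1^{n-2}$. $\mathrm{rk}:K\to\mathbb{Z}$ is the ring map $L_i\mapsto1$; $\deg:K\to\mathbb{Q}$ is additive with $\deg(1)=0$, $\deg(L_i)=1/a_i$, $\deg(EF)=\mathrm{rk}(E)\deg(F)+\mathrm{rk}(F)\deg(E)$. $\langle a,b\rangle=\chi(a^\vee\otimes b)$ is the Euler pairing (orbifold holomorphic Euler characteristic) and $(a|b)=\langle a,b\rangle+\langle b,a\rangle$ is the intersection pairing. $\sigma:K\to K$ is multiplication by the tangent bundle class $T=L_1+L_2+L_3-L-1$. *)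

theory Defs
  imports Complex_Main "HOL-Library.Poly_Mapping" "HOL-Library.Product_Plus"
begin

text \<open>Laurent monomials L1^i L2^j L3^k are indexed by exponent triples (i,j,k) in Z^3.
  Kpoly is the Laurent polynomial ring Z[L1^(+-1),L2^(+-1),L3^(+-1)] (group ring of Z^3).
  The K-ring K of the orbifold line P^1_{n-2,2,2} is the quotient of Kpoly by the ideal
  Krel_ideal below (the L_i are invertible in K, so this agrees with the quotient of
  Z[L1,L2,L3]).  All functions below (rk, deg, chi, dual, sigma) are defined on
  representatives; each is compatible with the ideal, so quantifying over all
  representatives is the same as quantifying over K.\<close>

type_synonym lmon = "int \<times> int \<times> int"
type_synonym Kpoly = "lmon \<Rightarrow>\<^sub>0 int"

definition Lmon :: "lmon \<Rightarrow> Kpoly" where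
  "Lmon x = Poly_Mapping.single x 1"

definition L1 :: Kpoly where "L1 = Lmon (1,0,0)"
definition L2 :: Kpoly where "L2 = Lmon (0,1,0)"
definition L3 :: Kpoly where "L3 = Lmon (0,0,1)"

definition ord_pt :: "nat \<Rightarrow> nat \<Rightarrow> nat" where
  "ord_pt n i = (if i = 1 then n - 2 else 2)"

definition Lcls :: "nat \<Rightarrow> Kpoly" where
  "Lcls n = L1 ^ (n - 2)"

definition Krel_ideal :: "nat \<Rightarrow> Kpoly set" where
  "Krel_ideal n = {p. \<exists>c1 c2 c3 d1 d2 d3 :: Kpoly.
      p = c1 * (L1 ^ (n-2) - L2 ^ 2) + c2 * (L2 ^ 2 - L3 ^ 2) + c3 * (L1 ^ (n-2) - L3 ^ 2)
        + d1 * ((L1 - 1) * (L2 - 1)) + d2 * ((L2 - 1) * (L3 - 1)) + d3 * ((L1 - 1) * (L3 - 1))}"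

definition Keq :: "nat \<Rightarrow> Kpoly \<Rightarrow> Kpoly \<Rightarrow> bool" where
  "Keq n p q \<longleftrightarrow> p - q \<in> Krel_ideal n"

definition rk :: "Kpoly \<Rightarrow> int" where
  "rk p = (\<Sum>x\<in>Poly_Mapping.keys p. Poly_Mapping.lookup p x)"

text \<open>degree: additive, deg 1 = 0, deg L_i = 1/a_i, Leibniz rule; on a monomial of rank 1
  L1^i L2^j L3^k this gives i/(n-2) + j/2 + k/2\<close>
definition deg :: "nat \<Rightarrow> Kpoly \<Rightarrow> rat" where
  "deg n p = (\<Sum>x\<in>Poly_Mapping.keys p. of_int (Poly_Mapping.lookup p x) *
      (of_int (fst x) / of_nat (n - 2) + of_int (fst (snd x)) / 2 + of_int (snd (snd x)) / 2))"

text \<open>orbifold holomorphic Euler characteristic: the line bundle O(i x1 + j x2 + k x3) has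
  normal form O(l c + sum l_i x_i) with 0 <= l_i < a_i, l = i div (n-2) + j div 2 + k div 2,
  and chi = l + 1; extended additively.\<close>
definition chi :: "nat \<Rightarrow> Kpoly \<Rightarrow> int" where
  "chi n p = (\<Sum>x\<in>Poly_Mapping.keys p. Poly_Mapping.lookup p x *
      (fst x div int (n - 2) + fst (snd x) div 2 + snd (snd x) div 2 + 1))"

definition dual :: "Kpoly \<Rightarrow> Kpoly" where
  "dual p = (\<Sum>x\<in>Poly_Mapping.keys p. Poly_Mapping.single (- x) (Poly_Mapping.lookup p x))"

definition euler :: "nat \<Rightarrow> Kpoly \<Rightarrow> Kpoly \<Rightarrow> int" where
  "euler n a b = chi n (dual a * b)"

definition ipair :: "nat \<Rightarrow> Kpoly \<Rightarrow> Kpoly \<Rightarrow> int" where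
  "ipair n a b = euler n a b + euler n b a"

definition Tcls :: "nat \<Rightarrow> Kpoly" where
  "Tcls n = L1 + L2 + L3 - Lcls n - 1"

definition sigma :: "nat \<Rightarrow> Kpoly \<Rightarrow> Kpoly" where
  "sigma n x = Tcls n * x"

end

theory Submission
  imports Defs
begin


definition ev :: "(lmon \<Rightarrow> 'b::comm_ring_1) \<Rightarrow> Kpoly \<Rightarrow> 'b" where
  "ev w p = (\<Sum>x\<in>Poly_Mapping.keys p. of_int (Poly_Mapping.lookup p x) * w x)"

lemma ev_superset:
  assumes "finite S" "Poly_Mapping.keys p \<subseteq> S"
  shows "ev w p = (\<Sum>x\<in>S. of_int (Poly_Mapping.lookup p x) * w x)"
  unfolding ev_def using assms
  by (intro sum.mono_neutral_left) (auto simp: in_keys_iff)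

lemma ev_diff: "ev w (a - b) = ev w a - ev w b"
proof -
  let ?S = "Poly_Mapping.keys a \<union> Poly_Mapping.keys b"
  have "ev w (a - b) = (\<Sum>x\<in>?S. of_int (Poly_Mapping.lookup (a-b) x) * w x)"
    using keys_diff[of a b] by (intro ev_superset) auto
  also have "\<dots> = (\<Sum>x\<in>?S. of_int (Poly_Mapping.lookup a x) * w x) - (\<Sum>x\<in>?S. of_int (Poly_Mapping.lookup b x) * w x)"
    by (simp add: lookup_minus algebra_simps sum_subtractf)
  also have "\<dots> = ev w a - ev w b"
    by (simp add: ev_superset[symmetric])
  finally show ?thesis .
qed

lemma ev_add: "ev w (a + b) = ev w a + ev w b"
proof -
  let ?S = "Poly_Mapping.keys a \<union> Poly_Mapping.keys b"
  have "ev w (a + b) = (\<Sum>x\<in>?S. of_int (Poly_Mapping.lookup (a+b) x) * w x)"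
    using keys_add[of a b] by (intro ev_superset) auto
  also have "\<dots> = (\<Sum>x\<in>?S. of_int (Poly_Mapping.lookup a x) * w x) + (\<Sum>x\<in>?S. of_int (Poly_Mapping.lookup b x) * w x)"
    by (simp add: lookup_add algebra_simps sum.distrib)
  also have "\<dots> = ev w a + ev w b"
    by (simp add: ev_superset[symmetric])
  finally show ?thesis .
qed

lemma ev_single: "ev w (Poly_Mapping.single x c) = of_int c * w x"
  by (simp add: ev_def)

lemma ev_Lmon: "ev w (Lmon x) = w x"
  by (simp add: ev_single Lmon_def)

definition fch :: "int \<Rightarrow> lmon \<Rightarrow> int" where
  "fch mi x = fst x div mi + fst (snd x) div 2 + snd (snd x) div 2 + 1"

lemma chi_ev: "chi n p = ev (fch (int (n-2))) p"
  by (simp add: chi_def ev_def fch_def)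

lemma deg_ev: "deg n p = ev (\<lambda>x. of_int (fst x) / of_nat (n - 2) + of_int (fst (snd x)) / 2 + of_int (snd (snd x)) / 2) p"
  by (simp add: deg_def ev_def)

lemma rk_ev: "rk p = ev (\<lambda>_. 1) p"
  by (simp add: rk_def ev_def)

lemma dual_superset:
  assumes "finite S" "Poly_Mapping.keys p \<subseteq> S"
  shows "dual p = (\<Sum>x\<in>S. Poly_Mapping.single (- x) (Poly_Mapping.lookup p x))"
  unfolding dual_def using assms
  by (intro sum.mono_neutral_left) (auto simp: in_keys_iff)

lemma dual_diff: "dual (a - b) = dual a - dual b"
proof -
  let ?S = "Poly_Mapping.keys a \<union> Poly_Mapping.keys b"
  have "dual (a - b) = (\<Sum>x\<in>?S. Poly_Mapping.single (- x) (Poly_Mapping.lookup (a-b) x))"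
    using keys_diff[of a b] by (intro dual_superset) auto
  also have "\<dots> = (\<Sum>x\<in>?S. Poly_Mapping.single (- x) (Poly_Mapping.lookup a x)) - (\<Sum>x\<in>?S. Poly_Mapping.single (- x) (Poly_Mapping.lookup b x))"
    by (simp add: lookup_minus single_diff sum_subtractf)
  also have "\<dots> = dual a - dual b"
    by (simp add: dual_superset[symmetric])
  finally show ?thesis .
qed

lemma dual_add: "dual (a + b) = dual a + dual b"
proof -
  let ?S = "Poly_Mapping.keys a \<union> Poly_Mapping.keys b"
  have "dual (a + b) = (\<Sum>x\<in>?S. Poly_Mapping.single (- x) (Poly_Mapping.lookup (a+b) x))"
    using keys_add[of a b] by (intro dual_superset) auto
  also have "\<dots> = (\<Sum>x\<in>?S. Poly_Mapping.single (- x) (Poly_Mapping.lookup a x)) + (\<Sum>x\<in>?S. Poly_Mapping.single (- x) (Poly_Mapping.lookup b x))"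
    by (simp add: lookup_add single_add sum.distrib)
  also have "\<dots> = dual a + dual b"
    by (simp add: dual_superset[symmetric])
  finally show ?thesis .
qed

lemma dual_Lmon: "dual (Lmon x) = Lmon (- x)"
  by (simp add: dual_def Lmon_def)

lemma Lmon_mult: "Lmon x * Lmon y = Lmon (x + y)"
  by (simp add: Lmon_def mult_single)

lemma Lmon_zero: "Lmon 0 = 1"
  by (simp add: Lmon_def)

lemma dual_one: "dual 1 = 1"
  using dual_Lmon[of 0] by (simp add: Lmon_zero)

lemma ext_lin:
  fixes F G :: "Kpoly \<Rightarrow> 'b::ab_group_add"
  assumes "\<And>a b. F (a - b) = F a - F b" "\<And>a b. G (a - b) = G a - G b"
    "\<And>x. F (Lmon x) = G (Lmon x)"
  shows "F p = G p"
proof -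
  have "Poly_Mapping.keys p \<subseteq> UNIV" by simp
  then show ?thesis
  proof (induction p rule: frag_induction)
    case zero
    have "F 0 = 0" using assms(1)[of 0 0] by simp
    moreover have "G 0 = 0" using assms(2)[of 0 0] by simp
    ultimately show ?case by simp
  next
    case (one x) then show ?case using assms(3) by (simp add: Lmon_def)
  next
    case (diff a b) then show ?case using assms(1,2) by simp
  qed
qed

lemma dual_mult: "dual (p * q) = dual p * dual q"
proof -
  have A: "dual (Lmon x * q) = dual (Lmon x) * dual q" for x
    by (rule ext_lin[where F="\<lambda>q. dual (Lmon x * q)" and G="\<lambda>q. dual (Lmon x) * dual q"])
       (simp_all add: right_diff_distrib dual_diff Lmon_mult dual_Lmon)
  show ?thesis
    by (rule ext_lin[where F="\<lambda>p. dual (p * q)" and G="\<lambda>p. dual p * dual q"])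
       (simp_all add: left_diff_distrib dual_diff A)
qed

lemma dual_power: "dual (p ^ s) = dual p ^ s"
  by (induction s) (simp_all add: dual_one dual_mult)

lemma sigma_pow: "(sigma n ^^ s) b = Tcls n ^ s * b"
  by (induction s) (simp_all add: sigma_def mult.assoc)

lemma L1_pow: "L1 ^ k = Lmon (int k, 0, 0)"
  by (induction k) (simp_all add: L1_def Lmon_zero[symmetric] Lmon_mult algebra_simps zero_prod_def)


lemma chi_diff: "chi n (a - b) = chi n a - chi n b"
  by (simp add: chi_ev ev_diff)

lemma chi_add: "chi n (a + b) = chi n a + chi n b"
  by (simp add: chi_ev ev_add)

lemma chi_Lmon: "chi n (Lmon x) = fch (int (n-2)) x"
  by (simp add: chi_ev ev_Lmon)

lemma Tcls_eq: "Tcls n = Lmon (1,0,0) + Lmon (0,1,0) + Lmon (0,0,1) - Lmon (int (n-2), 0, 0) - Lmon 0"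
  unfolding Tcls_def Lcls_def L1_pow by (simp add: L1_def L2_def L3_def Lmon_zero)

lemma dual_Tcls: "dual (Tcls n) = Lmon (-1,0,0) + Lmon (0,-1,0) + Lmon (0,0,-1) - Lmon (- int (n-2), 0, 0) - Lmon 0"
  by (simp add: Tcls_eq dual_add dual_diff dual_Lmon)

lemma chiT:
  assumes "n \<ge> 3"
  shows "chi n (p * Tcls n) = chi n (p * Lmon (1 - int (n-2), 1, 1))"
proof (rule ext_lin[where F="\<lambda>p. chi n (p * Tcls n)"])
  fix x :: lmon
  obtain i j k where x: "x = (i,j,k)" by (cases x) auto
  define mi where "mi = int (n-2)"
  have mi: "mi > 0" using assms by (simp add: mi_def)
  have h1: "(i + mi) div mi = i div mi + 1" using mi by simp
  have h2: "(1 + i - mi) div mi = (1 + i) div mi - 1"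
  proof -
    have "1 + i - mi = (1 + i) + (-1) * mi" by simp
    then show ?thesis using mi by (simp only: div_mult_self1)
  qed
  show "chi n (Lmon x * Tcls n) = chi n (Lmon x * Lmon (1 - int (n-2), 1, 1))"
    unfolding Tcls_eq
    by (simp add: algebra_simps Lmon_mult chi_add chi_diff chi_Lmon fch_def x mi_def[symmetric] h1 h2)
qed (simp_all add: left_diff_distrib chi_diff)

lemma chiTd:
  assumes "n \<ge> 3"
  shows "chi n (p * dual (Tcls n)) = chi n (p * Lmon (int (n-2) - 1, -1, -1))"
proof (rule ext_lin[where F="\<lambda>p. chi n (p * dual (Tcls n))"])
  fix x :: lmon
  obtain i j k where x: "x = (i,j,k)" by (cases x) auto
  define mi where "mi = int (n-2)"
  have mi: "mi > 0" using assms by (simp add: mi_def)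
  have h1: "(i - mi) div mi = i div mi - 1"
  proof -
    have "i - mi = i + (-1) * mi" by simp
    then show ?thesis using mi by (simp only: div_mult_self1)
  qed
  have h2: "(i + mi - 1) div mi = (i - 1) div mi + 1"
  proof -
    have "i + mi - 1 = (i - 1) + 1 * mi" by simp
    then show ?thesis using mi by (simp only: div_mult_self1)
  qed
  show "chi n (Lmon x * dual (Tcls n)) = chi n (Lmon x * Lmon (int (n-2) - 1, -1, -1))"
    unfolding dual_Tcls
    by (simp add: algebra_simps Lmon_mult chi_add chi_diff chi_Lmon fch_def x mi_def[symmetric] h1 h2)
qed (simp_all add: left_diff_distrib chi_diff)

lemma chiTs:
  assumes "n \<ge> 3"
  shows "chi n (p * Tcls n ^ s) = chi n (p * Lmon (int s * (1 - int (n-2)), int s, int s))"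
proof (induction s arbitrary: p)
  case 0 then show ?case by (simp add: Lmon_zero[symmetric] zero_prod_def)
next
  case (Suc s)
  have "chi n (p * Tcls n ^ Suc s) = chi n ((p * Tcls n ^ s) * Tcls n)"
    by (simp only: mult.assoc power_Suc2)
  also have "\<dots> = chi n ((p * Lmon (1 - int (n-2), 1, 1)) * Tcls n ^ s)"
    using chiT[OF assms, of "p * Tcls n ^ s"] by (simp add: mult_ac)
  also have "\<dots> = chi n (p * Lmon (int (Suc s) * (1 - int (n-2)), int (Suc s), int (Suc s)))"
  proof -
    have "(p * Lmon (1 - int (n-2), 1, 1)) * Tcls n ^ s = (p * Lmon (1 - int (n-2), 1, 1)) * Tcls n ^ s" ..
    then show ?thesis
      using Suc.IH[of "p * Lmon (1 - int (n-2), 1, 1)"]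
      by (simp add: mult.assoc Lmon_mult algebra_simps)
  qed
  finally show ?case .
qed

lemma chiTds:
  assumes "n \<ge> 3"
  shows "chi n (p * dual (Tcls n) ^ s) = chi n (p * Lmon (int s * (int (n-2) - 1), - int s, - int s))"
proof (induction s arbitrary: p)
  case 0 then show ?case by (simp add: Lmon_zero[symmetric] zero_prod_def)
next
  case (Suc s)
  have "chi n (p * dual (Tcls n) ^ Suc s) = chi n ((p * dual (Tcls n) ^ s) * dual (Tcls n))"
    by (simp only: mult.assoc power_Suc2)
  also have "\<dots> = chi n ((p * Lmon (int (n-2) - 1, -1, -1)) * dual (Tcls n) ^ s)"
    using chiTd[OF assms, of "p * dual (Tcls n) ^ s"] by (simp add: mult_ac)
  also have "\<dots> = chi n (p * Lmon (int (Suc s) * (int (n-2) - 1), - int (Suc s), - int (Suc s)))"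
    using Suc.IH[of "p * Lmon (int (n-2) - 1, -1, -1)"]
    by (simp add: mult.assoc Lmon_mult algebra_simps)
  finally show ?case .
qed


lemma gauss_rat: "(\<Sum>t = 1..m. (of_nat t :: rat)) = of_nat m * (of_nat m + 1) / 2"
  by (induction m) (simp_all add: field_simps)

lemma sum_blocks: fixes m :: nat shows "(\<Sum>s = 1..2*m. F s) = (\<Sum>s = 1..m. F s + F (s + m))"
proof -
  have "{1..2*m} = {1..m} \<union> {m+1..m+m}" by auto
  then have "(\<Sum>s = 1..2*m. F s) = (\<Sum>s = 1..m. F s) + (\<Sum>s = 1+m..m+m. F s)"
    by (simp add: sum.union_disjoint add.commute)
  also have "(\<Sum>s = 1+m..m+m. F s) = (\<Sum>s = 1..m. F (s + m))"
    by (rule sum.shift_bounds_cl_nat_ivl)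
  finally show ?thesis by (simp add: sum.distrib)
qed

lemma sum_pairs: fixes m :: nat shows "(\<Sum>s = 1..2*m. F s) = (\<Sum>t = 1..m. F (2*t - 1) + F (2*t))"
proof (induction m)
  case 0 then show ?case by simp
next
  case (Suc m)
  have e: "2 * Suc m = Suc (Suc (2*m))" by simp
  show ?case unfolding e using Suc by (simp add: sum.cl_ivl_Suc add.assoc)
qed

lemma sum_c:
  assumes "m > 0"
  shows "(\<Sum>s = 1..2*m. (1/2 - of_nat s / of_nat (2*m)) :: rat) = -1/2"
proof -
  have "(\<Sum>s = 1..2*m. (1/2 - of_nat s / of_nat (2*m)) :: rat)
      = of_nat (2*m) / 2 - (\<Sum>s = 1..2*m. of_nat s) / of_nat (2*m)"
    by (simp add: sum_subtractf sum_divide_distrib)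
  also have "\<dots> = -1/2" using assms unfolding gauss_rat by (simp add: field_simps)
  finally show ?thesis .
qed

lemma sum_m:
  fixes x :: int
  assumes "m > 0"
  shows "(\<Sum>s = 1..2*m. (1/2 - of_nat s / of_nat (2*m)) * (if int m dvd (x + int s) then 1 else 0) :: rat)
      = of_int (x mod int m) / of_nat m - 1/2"
proof -
  define r where "r = x mod int m"
  have r: "0 \<le> r" "r < int m" using assms by (simp_all add: r_def)
  define s0 where "s0 = m - nat r"
  have s0: "s0 \<in> {1..m}" using r by (simp add: s0_def)
  have key: "(int m dvd (x + int s)) = (s = s0)" if "s \<in> {1..m}" for s
  proof -
    have "(int m dvd (x + int s)) = ((r + int s) mod int m = 0)"
      by (simp add: r_def dvd_eq_mod_eq_0 mod_add_left_eq)
    also have "\<dots> = (r + int s = int m)"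
    proof
      assume h: "(r + int s) mod int m = 0"
      show "r + int s = int m"
      proof (cases "r + int s < int m")
        case True
        then have "(r + int s) mod int m = r + int s" using r that by (intro mod_pos_pos_trivial) auto
        then show ?thesis using h that r by simp
      next
        case False
        have eq: "r + int s = (r + int s - int m) + 1 * int m" by simp
        have "(r + int s) mod int m = (r + int s - int m) mod int m"
          by (subst eq, simp only: mod_mult_self1)
        also have "\<dots> = r + int s - int m" using r that False by (intro mod_pos_pos_trivial) auto
        finally have "(r + int s) mod int m = r + int s - int m" .
        moreover have "r + int s - int m < int m" using r that by auto
        ultimately have "(r + int s - int m) mod int m = r + int s - int m" by simp
        then show ?thesis using h \<open>(r + int s) mod int m = r + int s - int m\<close> by simp
      qed
    next
      assume "r + int s = int m"
      then show "(r + int s) mod int m = 0" by simp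
    qed
    also have "\<dots> = (s = s0)" using r that by (auto simp: s0_def)
    finally show ?thesis .
  qed
  have "(\<Sum>s = 1..2*m. (1/2 - of_nat s / of_nat (2*m)) * (if int m dvd (x + int s) then 1 else 0) :: rat)
      = (\<Sum>s = 1..m. (1/2 - of_nat s / of_nat (2*m)) * (if int m dvd (x + int s) then 1 else 0)
          + (1/2 - of_nat (s + m) / of_nat (2*m)) * (if int m dvd (x + int (s + m)) then 1 else 0))"
    by (rule sum_blocks)
  also have "\<dots> = (\<Sum>s = 1..m. if s = s0 then (1/2 - of_nat s0 / of_nat m :: rat) else 0)"
  proof (rule sum.cong)
    fix s assume s: "s \<in> {1..m}"
    have d: "(int m dvd (x + int (s + m))) = (int m dvd (x + int s))"
    proof -
      have "x + int (s + m) = (x + int s) + 1 * int m" by simp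
      then show ?thesis by (simp only: dvd_add_times_triv_right_iff)
    qed
    show "(1/2 - of_nat s / of_nat (2*m)) * (if int m dvd (x + int s) then 1 else 0)
          + (1/2 - of_nat (s + m) / of_nat (2*m)) * (if int m dvd (x + int (s + m)) then 1 else 0)
        = (if s = s0 then (1/2 - of_nat s0 / of_nat m :: rat) else 0)"
      unfolding d key[OF s] using assms by (simp add: field_simps)
  qed simp
  also have "\<dots> = 1/2 - of_nat s0 / of_nat m" using s0 by simp
  also have "\<dots> = of_int r / of_nat m - 1/2"
    using r assms by (simp add: s0_def field_simps of_nat_diff)
  finally show ?thesis by (simp add: r_def)
qed

lemma sum_2:
  fixes x :: int
  assumes "m > 0"
  shows "(\<Sum>s = 1..2*m. (1/2 - of_nat s / of_nat (2*m)) * (if 2 dvd (x + int s) then 1 else 0) :: rat)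
      = of_int (x mod 2) / 2 - 1/2"
proof -
  let ?c = "\<lambda>s::nat. (1/2 - of_nat s / of_nat (2*m)) :: rat"
  have "(\<Sum>s = 1..2*m. ?c s * (if 2 dvd (x + int s) then 1 else 0))
      = (\<Sum>t = 1..m. ?c (2*t-1) * (if 2 dvd (x + int (2*t-1)) then 1 else 0)
            + ?c (2*t) * (if 2 dvd (x + int (2*t)) then 1 else 0))"
    by (rule sum_pairs)
  also have "\<dots> = (\<Sum>t = 1..m. if even x then ?c (2*t) else ?c (2*t-1))"
  proof (rule sum.cong)
    fix t assume t: "t \<in> {1..m}"
    then have i: "int (2*t-1) = 2 * int t - 1" by auto
    show "?c (2*t-1) * (if 2 dvd (x + int (2*t-1)) then 1 else 0)
            + ?c (2*t) * (if 2 dvd (x + int (2*t)) then 1 else 0)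
        = (if even x then ?c (2*t) else ?c (2*t-1))"
      unfolding i by simp
  qed simp
  also have "\<dots> = of_int (x mod 2) / 2 - 1/2"
  proof (cases "even x")
    case True
    have "(\<Sum>t = 1..m. ?c (2*t)) = of_nat m / 2 - (\<Sum>t = 1..m. of_nat t) / of_nat m"
      using assms by (simp add: sum_subtractf sum_divide_distrib)
    also have "\<dots> = -1/2" using assms unfolding gauss_rat by (simp add: field_simps)
    finally show ?thesis using True by (simp add: even_iff_mod_2_eq_zero)
  next
    case False
    have "(\<Sum>t = 1..m. ?c (2*t-1)) = (\<Sum>t = 1..m. 1/2 + 1 / of_nat (2*m) - of_nat t / of_nat m)"
      by (rule sum.cong) (auto simp: of_nat_diff field_simps)
    also have "\<dots> = of_nat m / 2 + 1 / 2 - (\<Sum>t = 1..m. of_nat t) / of_nat m"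
    proof -
      have aux: "of_nat m * (1/2 + 1/(2*of_nat m)) = (of_nat m/2 + 1/2 :: rat)" using assms by (simp add: field_simps)
      show ?thesis by (simp add: sum_subtractf sum_divide_distrib sum.distrib aux)
    qed
    also have "\<dots> = 0"
    proof -
      have "(of_nat m :: rat) > 0" using assms by simp
      then show ?thesis unfolding gauss_rat by (simp add: field_simps)
    qed
    finally have S: "(\<Sum>t = 1..m. ?c (2*t-1)) = 0" .
    have "(\<Sum>t = 1..m. if even x then ?c (2*t) else ?c (2*t-1)) = (\<Sum>t = 1..m. ?c (2*t-1))"
      using False by (intro sum.cong) auto
    moreover have "x mod 2 = 1" using False by (simp add: odd_iff_mod_2_eq_one)
    ultimately show ?thesis using S by simp
  qed
  finally show ?thesis .
qed


lemma pair_div: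
  fixes x q :: int
  assumes "q > 0"
  shows "x div q + (- x) div q = (if q dvd x then 0 else -1)"
  using assms by (simp add: zdiv_zminus1_eq_if dvd_eq_mod_eq_0)

lemma h_eq:
  fixes mi u1 u2 u3 :: int
  assumes "mi > 0"
  shows "(of_int (fch mi (u1, u2, u3) + fch mi (- u1, - u2, - u3)) :: rat)
     = (if mi dvd u1 then 1 else 0) + (if 2 dvd u2 then 1 else 0) + (if 2 dvd u3 then 1 else 0) - 1"
proof -
  have "fch mi (u1, u2, u3) + fch mi (- u1, - u2, - u3)
     = (u1 div mi + (-u1) div mi) + (u2 div 2 + (-u2) div 2) + (u3 div 2 + (-u3) div 2) + 2"
    by (simp add: fch_def)
  also have "\<dots> = (if mi dvd u1 then 0 else -1) + (if 2 dvd u2 then 0 else -1) + (if 2 dvd u3 then 0 else -1) + 2"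
    using assms by (simp only: pair_div)
  finally show ?thesis by simp
qed

lemma arith_main:
  fixes i j k :: int and m :: nat
  assumes "m > 0"
  shows "(\<Sum>s = 1..2*m. (1/2 - of_nat s / of_nat (2*m)) *
      of_int (fch (int m) (i + int s * (1 - int m), j + int s, k + int s)
            + fch (int m) (- (i + int s * (1 - int m)), - (j + int s), - (k + int s))) :: rat)
    = - of_int (fch (int m) (i, j, k)) + of_int i / of_nat m + of_int j / 2 + of_int k / 2"
proof -
  let ?c = "\<lambda>s::nat. (1/2 - of_nat s / of_nat (2*m)) :: rat"
  have mi: "int m > 0" using assms by simp
  have "(\<Sum>s = 1..2*m. ?c s *
      of_int (fch (int m) (i + int s * (1 - int m), j + int s, k + int s)
            + fch (int m) (- (i + int s * (1 - int m)), - (j + int s), - (k + int s))))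
     = (\<Sum>s = 1..2*m. ?c s * (if int m dvd (i + int s) then 1 else 0)
          + ?c s * (if 2 dvd (j + int s) then 1 else 0)
          + ?c s * (if 2 dvd (k + int s) then 1 else 0) - ?c s)"
  proof (rule sum.cong)
    fix s assume "s \<in> {1..2*m}"
    have d: "(int m dvd (i + int s * (1 - int m))) = (int m dvd (i + int s))"
    proof -
      have "i + int s * (1 - int m) = (i + int s) + (- int s) * int m" by (simp add: algebra_simps)
      then show ?thesis by (simp only: dvd_add_times_triv_right_iff)
    qed
    show "?c s * of_int (fch (int m) (i + int s * (1 - int m), j + int s, k + int s)
            + fch (int m) (- (i + int s * (1 - int m)), - (j + int s), - (k + int s)))
        = ?c s * (if int m dvd (i + int s) then 1 else 0)
          + ?c s * (if 2 dvd (j + int s) then 1 else 0)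
          + ?c s * (if 2 dvd (k + int s) then 1 else 0) - ?c s"
      unfolding h_eq[OF mi] d by (simp add: algebra_simps)
  qed simp
  also have "\<dots> = (of_int (i mod int m) / of_nat m - 1/2) + (of_int (j mod 2) / 2 - 1/2)
        + (of_int (k mod 2) / 2 - 1/2) - (-1/2)"
    apply (subst sum_subtractf, subst sum.distrib, subst sum.distrib)
    apply (simp only: sum_m[OF assms] sum_2[OF assms] sum_c[OF assms])
    done
  also have "\<dots> = - of_int (fch (int m) (i, j, k)) + of_int i / of_nat m + of_int j / 2 + of_int k / 2"
  proof -
    have ei: "(of_int i :: rat) = of_nat m * of_int (i div int m) + of_int (i mod int m)"
      by (metis of_int_add of_int_mult of_int_of_nat_eq div_mult_mod_eq mult.commute)
    have ej: "(of_int j :: rat) = 2 * of_int (j div 2) + of_int (j mod 2)"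
      by (metis of_int_add of_int_mult of_int_numeral div_mult_mod_eq mult.commute)
    have ek: "(of_int k :: rat) = 2 * of_int (k div 2) + of_int (k mod 2)"
      by (metis of_int_add of_int_mult of_int_numeral div_mult_mod_eq mult.commute)
    have "(of_nat m :: rat) > 0" using assms by simp
    then show ?thesis unfolding fch_def by (simp add: ei ej ek field_simps)
  qed
  finally show ?thesis .
qed


lemma mono_ipair:
  assumes "n \<ge> 3"
  shows "ipair n (Lmon (a1,a2,a3)) (Tcls n ^ s * Lmon (b1,b2,b3)) =
     fch (int (n-2)) ((b1 - a1) + int s * (1 - int (n-2)), (b2 - a2) + int s, (b3 - a3) + int s)
   + fch (int (n-2)) (- ((b1 - a1) + int s * (1 - int (n-2))), - ((b2 - a2) + int s), - ((b3 - a3) + int s))"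
proof -
  have e1: "euler n (Lmon (a1,a2,a3)) (Tcls n ^ s * Lmon (b1,b2,b3))
      = chi n (Lmon (b1 - a1, b2 - a2, b3 - a3) * Tcls n ^ s)"
  proof -
    have "dual (Lmon (a1,a2,a3)) * (Tcls n ^ s * Lmon (b1,b2,b3))
        = (Lmon (-a1,-a2,-a3) * Lmon (b1,b2,b3)) * Tcls n ^ s"
      by (simp add: dual_Lmon mult_ac)
    then show ?thesis by (simp add: euler_def Lmon_mult)
  qed
  have e2: "euler n (Tcls n ^ s * Lmon (b1,b2,b3)) (Lmon (a1,a2,a3))
      = chi n (Lmon (a1 - b1, a2 - b2, a3 - b3) * dual (Tcls n) ^ s)"
  proof -
    have "dual (Tcls n ^ s * Lmon (b1,b2,b3)) * Lmon (a1,a2,a3)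
        = (Lmon (-b1,-b2,-b3) * Lmon (a1,a2,a3)) * dual (Tcls n) ^ s"
      by (simp add: dual_Lmon dual_mult dual_power mult_ac)
    then show ?thesis by (simp add: euler_def Lmon_mult)
  qed
  show ?thesis
    unfolding ipair_def e1 e2 chiTs[OF assms] chiTds[OF assms] Lmon_mult chi_Lmon
    by (simp add: algebra_simps)
qed

lemma ipair_diff1: "ipair n (a - b) c = ipair n a c - ipair n b c"
  by (simp add: ipair_def euler_def dual_diff left_diff_distrib right_diff_distrib chi_diff)

lemma ipair_diff2: "ipair n c (a - b) = ipair n c a - ipair n c b"
  by (simp add: ipair_def euler_def dual_diff left_diff_distrib right_diff_distrib chi_diff)

lemma euler_diff1: "euler n (a - b) c = euler n a c - euler n b c"
  by (simp add: euler_def dual_diff left_diff_distrib chi_diff)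

lemma euler_diff2: "euler n c (a - b) = euler n c a - euler n c b"
  by (simp add: euler_def right_diff_distrib chi_diff)

lemma rk_diff: "rk (a - b) = rk a - rk b"
  by (simp add: rk_ev ev_diff)

lemma deg_diff: "deg n (a - b) = deg n a - deg n b"
  by (simp add: deg_ev ev_diff)

lemma rk_Lmon: "rk (Lmon x) = 1"
  by (simp add: rk_ev ev_Lmon)

lemma deg_Lmon: "deg n (Lmon (x1,x2,x3)) = of_int x1 / of_nat (n - 2) + of_int x2 / 2 + of_int x3 / 2"
  by (simp add: deg_ev ev_Lmon)

theorem lemma10:
  fixes n :: nat and \<alpha> \<beta> :: Kpoly
  assumes "n \<ge> 3"
  shows "(\<Sum>s = 1..2 * (n - 2). (1/2 - of_nat s / of_nat (2 * (n - 2))) *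
            of_int (ipair n \<alpha> ((sigma n ^^ s) \<beta>)) :: rat)
         = - of_int (euler n \<alpha> \<beta>) + of_int (rk \<alpha>) * deg n \<beta> - of_int (rk \<beta>) * deg n \<alpha>"
proof -
  define m where "m = n - 2"
  have m: "m > 0" using assms by (simp add: m_def)
  have mono: "(\<Sum>s = 1..2 * (n - 2). (1/2 - of_nat s / of_nat (2 * (n - 2))) *
            of_int (ipair n (Lmon a) ((sigma n ^^ s) (Lmon b))) :: rat)
         = - of_int (euler n (Lmon a) (Lmon b)) + of_int (rk (Lmon a)) * deg n (Lmon b)
           - of_int (rk (Lmon b)) * deg n (Lmon a)" for a b
  proof -
    obtain a1 a2 a3 where a: "a = (a1,a2,a3)" by (cases a) auto
    obtain b1 b2 b3 where b: "b = (b1,b2,b3)" by (cases b) auto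
    have eu: "euler n (Lmon (a1,a2,a3)) (Lmon (b1,b2,b3)) = fch (int m) (b1 - a1, b2 - a2, b3 - a3)"
      by (simp add: euler_def dual_Lmon Lmon_mult chi_Lmon m_def)
    have "(\<Sum>s = 1..2 * (n - 2). (1/2 - of_nat s / of_nat (2 * (n - 2))) *
            of_int (ipair n (Lmon a) ((sigma n ^^ s) (Lmon b))) :: rat)
        = (\<Sum>s = 1..2*m. (1/2 - of_nat s / of_nat (2*m)) *
      of_int (fch (int m) ((b1 - a1) + int s * (1 - int m), (b2 - a2) + int s, (b3 - a3) + int s)
            + fch (int m) (- ((b1 - a1) + int s * (1 - int m)), - ((b2 - a2) + int s), - ((b3 - a3) + int s))))"
      by (simp add: sigma_pow a b mono_ipair[OF assms] m_def)
    also have "\<dots> = - of_int (fch (int m) (b1 - a1, b2 - a2, b3 - a3)) + of_int (b1 - a1) / of_nat m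
        + of_int (b2 - a2) / 2 + of_int (b3 - a3) / 2"
      by (rule arith_main[OF m])
    also have "\<dots> = - of_int (euler n (Lmon a) (Lmon b)) + of_int (rk (Lmon a)) * deg n (Lmon b)
           - of_int (rk (Lmon b)) * deg n (Lmon a)"
      unfolding a b eu rk_Lmon deg_Lmon m_def[symmetric] by (simp add: diff_divide_distrib)
    finally show ?thesis .
  qed
  have step: "(\<Sum>s = 1..2 * (n - 2). (1/2 - of_nat s / of_nat (2 * (n - 2))) *
            of_int (ipair n (Lmon a) ((sigma n ^^ s) \<beta>)) :: rat)
         = - of_int (euler n (Lmon a) \<beta>) + of_int (rk (Lmon a)) * deg n \<beta>
           - of_int (rk \<beta>) * deg n (Lmon a)" for a
  proof (rule ext_lin[where F="\<lambda>\<beta>. (\<Sum>s = 1..2 * (n - 2). (1/2 - of_nat s / of_nat (2 * (n - 2))) *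
            of_int (ipair n (Lmon a) ((sigma n ^^ s) \<beta>)) :: rat)"
        and G="\<lambda>\<beta>. - of_int (euler n (Lmon a) \<beta>) + of_int (rk (Lmon a)) * deg n \<beta>
           - of_int (rk \<beta>) * deg n (Lmon a)"])
    fix x y :: Kpoly
    have "(\<Sum>s = 1..2 * (n - 2). (1/2 - of_nat s / of_nat (2 * (n - 2))) *
            of_int (ipair n (Lmon a) ((sigma n ^^ s) (x - y))) :: rat)
        = (\<Sum>s = 1..2 * (n - 2). (1/2 - of_nat s / of_nat (2 * (n - 2))) *
            of_int (ipair n (Lmon a) ((sigma n ^^ s) x)) - (1/2 - of_nat s / of_nat (2 * (n - 2))) *
            of_int (ipair n (Lmon a) ((sigma n ^^ s) y)))"
      by (intro sum.cong) (simp_all add: sigma_pow right_diff_distrib ipair_diff2)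
    then show "(\<Sum>s = 1..2 * (n - 2). (1/2 - of_nat s / of_nat (2 * (n - 2))) *
            of_int (ipair n (Lmon a) ((sigma n ^^ s) (x - y))) :: rat)
        = (\<Sum>s = 1..2 * (n - 2). (1/2 - of_nat s / of_nat (2 * (n - 2))) *
            of_int (ipair n (Lmon a) ((sigma n ^^ s) x)))
         - (\<Sum>s = 1..2 * (n - 2). (1/2 - of_nat s / of_nat (2 * (n - 2))) *
            of_int (ipair n (Lmon a) ((sigma n ^^ s) y)))"
      by (simp only: sum_subtractf)
  next
    fix x y :: Kpoly
    show "- of_int (euler n (Lmon a) (x - y)) + of_int (rk (Lmon a)) * deg n (x - y)
           - of_int (rk (x - y)) * deg n (Lmon a)
        = (- of_int (euler n (Lmon a) x) + of_int (rk (Lmon a)) * deg n x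
           - of_int (rk x) * deg n (Lmon a))
        - (- of_int (euler n (Lmon a) y) + of_int (rk (Lmon a)) * deg n y
           - of_int (rk y) * deg n (Lmon a))"
      by (simp add: euler_diff2 rk_diff deg_diff algebra_simps)
  qed (rule mono)
  show ?thesis
  proof (rule ext_lin[where F="\<lambda>\<alpha>. (\<Sum>s = 1..2 * (n - 2). (1/2 - of_nat s / of_nat (2 * (n - 2))) *
            of_int (ipair n \<alpha> ((sigma n ^^ s) \<beta>)) :: rat)"
        and G="\<lambda>\<alpha>. - of_int (euler n \<alpha> \<beta>) + of_int (rk \<alpha>) * deg n \<beta>
           - of_int (rk \<beta>) * deg n \<alpha>"])
    fix x y :: Kpoly
    have "(\<Sum>s = 1..2 * (n - 2). (1/2 - of_nat s / of_nat (2 * (n - 2))) *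
            of_int (ipair n (x - y) ((sigma n ^^ s) \<beta>)) :: rat)
        = (\<Sum>s = 1..2 * (n - 2). (1/2 - of_nat s / of_nat (2 * (n - 2))) *
            of_int (ipair n x ((sigma n ^^ s) \<beta>)) - (1/2 - of_nat s / of_nat (2 * (n - 2))) *
            of_int (ipair n y ((sigma n ^^ s) \<beta>)))"
      by (intro sum.cong) (simp_all add: right_diff_distrib ipair_diff1)
    then show "(\<Sum>s = 1..2 * (n - 2). (1/2 - of_nat s / of_nat (2 * (n - 2))) *
            of_int (ipair n (x - y) ((sigma n ^^ s) \<beta>)) :: rat)
        = (\<Sum>s = 1..2 * (n - 2). (1/2 - of_nat s / of_nat (2 * (n - 2))) *
            of_int (ipair n x ((sigma n ^^ s) \<beta>)))
         - (\<Sum>s = 1..2 * (n - 2). (1/2 - of_nat s / of_nat (2 * (n - 2))) *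
            of_int (ipair n y ((sigma n ^^ s) \<beta>)))"
      by (simp only: sum_subtractf)
  next
    fix x y :: Kpoly
    show "- of_int (euler n (x - y) \<beta>) + of_int (rk (x - y)) * deg n \<beta>
           - of_int (rk \<beta>) * deg n (x - y)
        = (- of_int (euler n x \<beta>) + of_int (rk x) * deg n \<beta> - of_int (rk \<beta>) * deg n x)
        - (- of_int (euler n y \<beta>) + of_int (rk y) * deg n \<beta> - of_int (rk \<beta>) * deg n y)"
      by (simp add: euler_diff1 rk_diff deg_diff algebra_simps)
  qed (rule step)
qed

end
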